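(* Let $X$ be a set with $n\ge1$ elements and $\lambda_n=|\mathfrak{P}(X)|$. Then $$\lambda_n=\sum_{k=1}^{n}\alpha_{n,k}\left(\sum_{\ell=0}^{\lfloor k/3\rfloor}\beta_{k,\ell}\,3^{\ell}\right),\qquad \beta_{k,\ell}=\frac{k!}{6^{\ell}\,\ell!\,(k-3\ell)!},$$ where $\alpha_{n,k}$ is the Stirling number of the second kind (number of partitions of an $n$-set into $k$ blocks) and $\beta_{k,\ell}$ is the number of partitions of a $k$-element set into $\ell$ blocks of size $3$ and $k-3\ell$ blocks of size $1$.
   Context: A set pair system on a finite set $X$ is a set of ordered pairs $(S,H)$ of subsets of $X$ with $S\ne\emptyset$ and $S\cap H=\emptyset$. A polestar system is a set pair system $\mathcal{S}$ with (PL1) $\{S:(S,H)\in\mathcal{S}\}$ is a partition of $X$; (PL2) distinct $(S,H),(S',H')\in\mathcal{S}$ have $S\ne S'$; (PL3) for each $(S,H)\in\mathcal{S}$ with $H\ne\emptyset$, $(H,\emptyset)\in\mathcal{S}$ and there is exactly one $(S',H')\in\mathcal{S}$ with $(S',H')\ne(S,H)$ and $H'=H$. $\mathfrak{P}(X)$ is the set of polestar systems on $X$. *)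

theory Defs
  imports Complex_Main "HOL-Combinatorics.Stirling" "HOL-Library.Disjoint_Sets"
begin

definition set_pair_system :: "'a set \<Rightarrow> ('a set \<times> 'a set) set \<Rightarrow> bool" where
  "set_pair_system X \<S> \<longleftrightarrow>
     (\<forall>(S, H) \<in> \<S>. S \<subseteq> X \<and> H \<subseteq> X \<and> S \<noteq> {} \<and> S \<inter> H = {})"

definition polestar_system :: "'a set \<Rightarrow> ('a set \<times> 'a set) set \<Rightarrow> bool" where
  "polestar_system X \<S> \<longleftrightarrow>
     set_pair_system X \<S>
   \<and> partition_on X (fst ` \<S>)
   \<and> (\<forall>p \<in> \<S>. \<forall>q \<in> \<S>. p \<noteq> q \<longrightarrow> fst p \<noteq> fst q)
   \<and> (\<forall>(S, H) \<in> \<S>. H \<noteq> {} \<longrightarrow>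
        (H, {}) \<in> \<S> \<and> (\<exists>!q. q \<in> \<S> \<and> q \<noteq> (S, H) \<and> snd q = H))"

definition polestar_systems :: "'a set \<Rightarrow> ('a set \<times> 'a set) set set" where
  "polestar_systems X = {\<S>. polestar_system X \<S>}"

end

theory Submission
  imports Defs
begin



lemma partD: assumes "partition_on A P" 
  shows "\<Union>P = A" "\<And>p q. p \<in> P \<Longrightarrow> q \<in> P \<Longrightarrow> p \<noteq> q \<Longrightarrow> p \<inter> q = {}" "{} \<notin> P"
  using assms unfolding partition_on_def disjoint_def by auto

lemma part_insert_single:
  assumes "x \<notin> A" "partition_on A Q" shows "partition_on (insert x A) (insert {x} Q)"
proof (rule partition_onI)
  note d = partD[OF assms(2)]
  show "\<Union>(insert {x} Q) = insert x A" using d by auto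
  show "{} \<notin> insert {x} Q" using d by auto
  fix p q assume "p \<in> insert {x} Q" "q \<in> insert {x} Q" "p \<noteq> q"
  then show "disjnt p q" using d assms(1) unfolding disjnt_def by auto
qed

lemma part_remove_single:
  assumes "x \<notin> A" "partition_on (insert x A) P" "{x} \<in> P" shows "partition_on A (P - {{x}})"
proof (rule partition_onI)
  note d = partD[OF assms(2)]
  show "\<Union>(P - {{x}}) = A"
  proof
    show "\<Union>(P - {{x}}) \<subseteq> A" using d assms by blast
    show "A \<subseteq> \<Union>(P - {{x}})" using d assms by blast
  qed
  show "{} \<notin> P - {{x}}" using d by auto
  fix p q assume "p \<in> P - {{x}}" "q \<in> P - {{x}}" "p \<noteq> q"
  then show "disjnt p q" using d assms(1) unfolding disjnt_def by auto
qed

lemma part_merge: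
  assumes "x \<notin> A" "partition_on A Q" "B \<in> Q"
  shows "partition_on (insert x A) (insert (insert x B) (Q - {B}))"
proof (rule partition_onI)
  note d = partD[OF assms(2)]
  have "\<Union>(insert (insert x B) (Q - {B})) = insert x (B \<union> \<Union>(Q - {B}))" by auto
  also have "B \<union> \<Union>(Q - {B}) = \<Union>Q" using assms(3) by auto
  finally show "\<Union>(insert (insert x B) (Q - {B})) = insert x A" using d by simp
  show "{} \<notin> insert (insert x B) (Q - {B})" using d by auto
  fix p q assume pq: "p \<in> insert (insert x B) (Q - {B})" "q \<in> insert (insert x B) (Q - {B})" "p \<noteq> q"
  have xB: "x \<notin> \<Union>Q" using d(1) assms(1) by simp
  show "disjnt p q"
  proof (cases "p = insert x B")
    case True then have "q \<in> Q - {B}" using pq by auto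
    then show ?thesis using True d(2)[of B q] xB assms(3) unfolding disjnt_def by auto
  next
    case False then have p: "p \<in> Q - {B}" using pq by auto
    show ?thesis
    proof (cases "q = insert x B")
      case True
      then show ?thesis using p d(2)[of B p] xB assms(3) unfolding disjnt_def by auto
    next
      case False then have "q \<in> Q - {B}" using pq by auto
      then show ?thesis using p d(2)[of p q] pq(3) unfolding disjnt_def by auto
    qed
  qed
qed

lemma part_split:
  assumes "x \<notin> A" "partition_on (insert x A) P" "C \<in> P" "x \<in> C" "C \<noteq> {x}"
  shows "partition_on A (insert (C-{x}) (P-{C}))"
proof (rule partition_onI)
  note d = partD[OF assms(2)]
  have xo: "x \<notin> D" if "D \<in> P" "D \<noteq> C" for D using d(2)[OF that(1) assms(3) that(2)] assms(4) by auto
  have "\<Union>(insert (C-{x}) (P-{C})) = (C - {x}) \<union> \<Union>(P-{C})" by auto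
  also have "\<dots> = \<Union>P - {x}"
  proof
    show "(C - {x}) \<union> \<Union>(P-{C}) \<subseteq> \<Union>P - {x}" using xo assms(3) by blast
    show "\<Union>P - {x} \<subseteq> (C - {x}) \<union> \<Union>(P-{C})" by blast
  qed
  finally show "\<Union>(insert (C-{x}) (P-{C})) = A" using d(1) assms(1) by auto
  have "C - {x} \<noteq> {}" using assms(4,5) by blast
  then show "{} \<notin> insert (C-{x}) (P-{C})" using d(3) by blast
  fix p q assume pq: "p \<in> insert (C-{x}) (P-{C})" "q \<in> insert (C-{x}) (P-{C})" "p \<noteq> q"
  show "disjnt p q"
  proof (cases "p = C - {x}")
    case True then have "q \<in> P - {C}" using pq by auto
    then show ?thesis using True d(2)[of C q] assms(3) unfolding disjnt_def by auto
  next
    case False then have p: "p \<in> P - {C}" using pq by auto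
    show ?thesis
    proof (cases "q = C - {x}")
      case True
      then show ?thesis using p d(2)[of C p] assms(3) unfolding disjnt_def by auto
    next
      case False then have "q \<in> P - {C}" using pq by auto
      then show ?thesis using p d(2)[of p q] pq(3) unfolding disjnt_def by auto
    qed
  qed
qed


lemma part_block_unique:
  assumes "partition_on A P" "C \<in> P" "D \<in> P" "x \<in> C" "x \<in> D" shows "C = D"
  using partD(2)[OF assms(1,2,3)] assms(4,5) by blast

lemma part_blk:
  assumes "partition_on A P" "x \<in> A"
  shows "(THE C. C \<in> P \<and> x \<in> C) \<in> P" "x \<in> (THE C. C \<in> P \<and> x \<in> C)"
proof -
  have "\<exists>!C. C \<in> P \<and> x \<in> C"
    using partD(1)[OF assms(1)] assms(2) part_block_unique[OF assms(1)] by blast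
  from theI'[OF this] show "(THE C. C \<in> P \<and> x \<in> C) \<in> P" "x \<in> (THE C. C \<in> P \<and> x \<in> C)" by auto
qed

lemma part_blk_eq:
  assumes "partition_on A P" "C \<in> P" "x \<in> C"
  shows "(THE C. C \<in> P \<and> x \<in> C) = C"
  using part_block_unique[OF assms(1)] assms(2,3) by (intro the_equality) auto

lemma stirling_partitions:
  assumes "finite A" shows "card {P. partition_on A P \<and> card P = k} = Stirling (card A) k"
  using assms
proof (induction A arbitrary: k rule: finite_induct)
  case empty
  have "{P. P = ({}::'a set set) \<and> card P = 0} = {{}}" by auto
  then show ?case by (cases k) (auto simp: partition_on_empty)
next
  case (insert x A)
  let ?S = "\<lambda>A k. {P. partition_on A P \<and> card P = k}"
  show ?case
  proof (cases k)
    case 0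
    have "?S (insert x A) k = {}"
    proof -
      { fix P assume "partition_on (insert x A) P" "card P = k"
        then have "P = {}" using finite_elements[of "insert x A" P] insert 0 by auto
        then have False using \<open>partition_on (insert x A) P\<close> by (auto simp: partition_on_def) }
      then show ?thesis by blast
    qed
    then have "card (?S (insert x A) k) = 0" by (simp only: card.empty)
    then show ?thesis using 0 insert by simp
  next
    case (Suc j)
    define S1 where "S1 = {P \<in> ?S (insert x A) k. {x} \<in> P}"
    define S2 where "S2 = {P \<in> ?S (insert x A) k. {x} \<notin> P}"
    have fin: "finite (?S B m)" if "finite B" for B :: "'a set" and m
      using finitely_many_partition_on[OF that] by (rule rev_finite_subset) auto
    have split: "?S (insert x A) k = S1 \<union> S2" "S1 \<inter> S2 = {}" unfolding S1_def S2_def by auto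
    have S1: "S1 = insert {x} ` ?S A j"
    proof
      show "S1 \<subseteq> insert {x} ` ?S A j"
      proof
        fix P assume P: "P \<in> S1"
        then have p: "partition_on (insert x A) P" "card P = Suc j" "{x} \<in> P" using Suc by (auto simp: S1_def)
        have finP: "finite P" using finite_elements[OF _ p(1)] insert by simp
        have "P = insert {x} (P - {{x}})" using p by auto
        moreover have "partition_on A (P - {{x}})" using part_remove_single[OF insert(2) p(1,3)] .
        moreover have "card (P - {{x}}) = j" using p finP by simp
        ultimately show "P \<in> insert {x} ` ?S A j" by blast
      qed
      show "insert {x} ` ?S A j \<subseteq> S1"
      proof
        fix P assume "P \<in> insert {x} ` ?S A j"
        then obtain Q where Q: "partition_on A Q" "card Q = j" and P: "P = insert {x} Q" by auto
        have "partition_on (insert x A) (insert {x} Q)" using part_insert_single[OF insert(2) Q(1)] .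
        moreover have "{x} \<notin> Q" using Q insert(2) by (auto simp: partition_on_def)
        moreover have "finite Q" using finite_elements[OF _ Q(1)] insert by simp
        ultimately show "P \<in> S1" using Q Suc P by (auto simp: S1_def)
      qed
    qed
    have inj1: "inj_on (insert {x}) (?S A j)"
    proof (rule inj_onI)
      fix Q R assume "Q \<in> ?S A j" "R \<in> ?S A j" "insert {x} Q = insert {x} R"
      moreover have "{x} \<notin> Q" "{x} \<notin> R" using calculation insert(2) by (auto simp: partition_on_def)
      ultimately show "Q = R" by (metis insert_ident)
    qed
    have cS1: "card S1 = Stirling (card A) j"
      using S1 card_image[OF inj1] insert.IH by simp
    define f where "f = (\<lambda>(Q, B). insert (insert x B) (Q - {B}))"
    define blk where "blk = (\<lambda>P. THE C. C \<in> P \<and> x \<in> C)"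
    define g where "g = (\<lambda>P. (insert (blk P - {x}) (P - {blk P}), blk P - {x}))"
    have bij: "bij_betw f (SIGMA Q:?S A k. Q) S2"
    proof (rule bij_betw_byWitness[where f'=g])
      show "\<forall>a\<in>(SIGMA Q:?S A k. Q). g (f a) = a"
      proof
        fix a assume "a \<in> (SIGMA Q:?S A k. Q)"
        then obtain Q B where a: "a = (Q, B)" "partition_on A Q" "B \<in> Q" by auto
        have xQ: "x \<notin> D" if "D \<in> Q" for D using partD(1)[OF a(2)] insert(2) that by auto
        have pm: "partition_on (insert x A) (f a)" using part_merge[OF insert(2) a(2,3)] a(1) f_def by simp
        have "blk (f a) = insert x B" unfolding blk_def
          by (rule part_blk_eq[OF pm]) (auto simp: a f_def)
        moreover have "insert x B - {x} = B" using xQ a(3) by auto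
        moreover have "f a - {insert x B} = Q - {B}" using xQ by (auto simp: a f_def)
        ultimately show "g (f a) = a" using a(1,3) by (auto simp: g_def)
      qed
      show "\<forall>a'\<in>S2. f (g a') = a'"
      proof
        fix P assume "P \<in> S2"
        then have p: "partition_on (insert x A) P" "{x} \<notin> P" by (auto simp: S2_def)
        have C: "blk P \<in> P" "x \<in> blk P" using part_blk[OF p(1)] by (auto simp: blk_def)
        have "C' \<notin> P - {blk P}" if "C' = blk P - {x}" for C'
        proof
          assume "C' \<in> P - {blk P}"
          then have "C' \<inter> blk P = {}" using partD(2)[OF p(1), of C' "blk P"] C by auto
          moreover have "C' \<noteq> {}"
          proof
            assume "C' = {}" then have "blk P = {x}" using that C(2) by blast
            then show False using C(1) p(2) by simp
          qed
          ultimately show False using that by auto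
        qed
        then have "insert (blk P - {x}) (P - {blk P}) - {blk P - {x}} = P - {blk P}" by auto
        moreover have "insert x (blk P - {x}) = blk P" using C by auto
        ultimately show "f (g P) = P" using C by (auto simp: f_def g_def)
      qed
      show "f ` (SIGMA Q:?S A k. Q) \<subseteq> S2"
      proof
        fix P assume "P \<in> f ` (SIGMA Q:?S A k. Q)"
        then obtain Q B where Q: "partition_on A Q" "card Q = k" "B \<in> Q" and P: "P = f (Q, B)" by auto
        have xQ: "x \<notin> D" if "D \<in> Q" for D using partD(1)[OF Q(1)] insert(2) that by auto
        have pm: "partition_on (insert x A) P" using part_merge[OF insert(2) Q(1,3)] P f_def by simp
        have finQ: "finite Q" using finite_elements[OF _ Q(1)] insert by simp
        have "insert x B \<notin> Q - {B}" using xQ by auto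
        moreover have "card Q > 0" using finQ Q(3) card_gt_0_iff by blast
        ultimately have "card P = card Q" using finQ Q(3) by (simp add: P f_def card_Suc_Diff1)
        moreover have "{x} \<notin> P"
        proof
          assume "{x} \<in> P"
          moreover have "B \<noteq> {}" using partD(3)[OF Q(1)] Q(3) by auto
          ultimately show False using xQ Q(3) by (auto simp: P f_def)
        qed
        ultimately show "P \<in> S2" using pm Q by (auto simp: S2_def)
      qed
      show "g ` S2 \<subseteq> (SIGMA Q:?S A k. Q)"
      proof
        fix a assume "a \<in> g ` S2"
        then obtain P where P: "P \<in> S2" and a: "a = g P" by auto
        then have p: "partition_on (insert x A) P" "{x} \<notin> P" "card P = k" by (auto simp: S2_def)
        have C: "blk P \<in> P" "x \<in> blk P" using part_blk[OF p(1)] by (auto simp: blk_def)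
        have Cx: "blk P \<noteq> {x}" using C p(2) by auto
        have pq: "partition_on A (insert (blk P - {x}) (P - {blk P}))"
          using part_split[OF insert(2) p(1) C Cx] .
        have notin: "blk P - {x} \<notin> P - {blk P}"
        proof
          assume "blk P - {x} \<in> P - {blk P}"
          then have "(blk P - {x}) \<inter> blk P = {}" using partD(2)[OF p(1), of "blk P - {x}" "blk P"] C by auto
          moreover have "blk P - {x} \<noteq> {}" using C Cx by blast
          ultimately show False by auto
        qed
        have finP: "finite P" using finite_elements[OF _ p(1)] insert by simp
        have "card (insert (blk P - {x}) (P - {blk P})) = card P"
        proof -
          have "card P > 0" using finP C(1) by (auto simp: card_gt_0_iff)
          then show ?thesis using notin finP C(1) by (simp add: card_Suc_Diff1)
        qed
        then show "a \<in> (SIGMA Q:?S A k. Q)" using pq p(3) a by (auto simp: g_def)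
      qed
    qed
    have "card S2 = card (SIGMA Q:?S A k. Q)" using bij_betw_same_card[OF bij] by simp
    also have "\<dots> = (\<Sum>Q\<in>?S A k. card Q)"
      by (rule card_SigmaI) (use fin[OF insert(1)] finite_elements insert(1) in auto)
    also have "\<dots> = k * Stirling (card A) k"
      using insert.IH by simp
    finally have cS2: "card S2 = k * Stirling (card A) k" .
    have "card (?S (insert x A) k) = card S1 + card S2"
    proof -
      have "finite (S1 \<union> S2)" using split(1) fin[of "insert x A" k] insert(1) by simp
      then show ?thesis unfolding split(1) by (intro card_Un_disjoint) (use split(2) in auto)
    qed
    then show ?thesis using cS1 cS2 Suc insert by simp
  qed
qed




fun F :: "nat \<Rightarrow> nat" where
  "F 0 = 1"
| "F (Suc k) = F k + 3 * (k choose 2) * F (k - 2)"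

definition Tt :: "nat \<Rightarrow> nat \<Rightarrow> real" where
  "Tt k l = (if 3 * l \<le> k then fact k / (6 ^ l * fact l * fact (k - 3 * l)) * 3 ^ l else 0)"

lemma choose2_real: "real (n choose 2) = real n * (real n - 1) / 2"
proof (induction n)
  case 0 then show ?case by simp
next
  case (Suc n)
  have "(Suc n choose 2) = (n choose 1) + (n choose 2)" by (simp add: numeral_2_eq_2)
  then show ?case using Suc by (simp add: field_simps)
qed

lemma T_zero: "Tt k 0 = 1" by (simp add: Tt_def)

lemma T_step: "Tt (m+3) (Suc l) = Tt (m+2) (Suc l) + 3 * real ((m+2) choose 2) * Tt m l"
proof -
  have c2: "real ((m+2) choose 2) = (real m + 2) * (real m + 1) / 2"
    using choose2_real[of "m+2"] by (simp add: field_simps)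
  consider (c) "m < 3*l" | (b) "m = 3*l" | (a') "3*l < m" by linarith
  then show ?thesis
  proof cases
    case a'
    then obtain j where a: "m = 3*l + Suc j" using less_imp_Suc_add by fastforce
    define A where "A = (fact (3*l+j+1) :: real)"
    define B where "B = (fact l :: real)"
    define C where "C = (fact j :: real)"
    define L where "L = real l + 1"
    define J where "J = real j + 1"
    define E where "E = (6::real) ^ l"
    define R where "R = (3::real) ^ l"
    have pos: "A > 0" "B > 0" "C > 0" "L > 0" "J > 0" "E > 0" "R > 0"
      unfolding A_def B_def C_def L_def J_def E_def R_def by auto
    have e1: "fact (m+3) = (3 * real l + real j + 4) * (3 * real l + real j + 3) * (3 * real l + real j + 2) * A"
      unfolding a A_def by (simp add: fact_Suc algebra_simps numeral_eq_Suc)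
    have e2: "fact (m+2) = (3 * real l + real j + 3) * (3 * real l + real j + 2) * A"
      unfolding a A_def by (simp add: fact_Suc algebra_simps numeral_eq_Suc)
    have e3: "fact m = A" unfolding a A_def by (simp add: algebra_simps)
    have l1: "fact (Suc l) = L * B" unfolding B_def L_def by (simp add: fact_Suc algebra_simps)
    have j1: "fact (Suc j) = J * C" unfolding C_def J_def by (simp add: fact_Suc algebra_simps)
    have c2': "real ((m+2) choose 2) = (3 * real l + real j + 3) * (3 * real l + real j + 2) / 2"
      using c2 a by (simp add: algebra_simps)
    have d1: "m + 3 - 3 * Suc l = Suc j" "m + 2 - 3 * Suc l = j" "m - 3 * l = Suc j" using a by auto
    have t1: "Tt (m+3) (Suc l) = (3 * real l + real j + 4) * (3 * real l + real j + 3) * (3 * real l + real j + 2) * A / (6 * E * (L * B) * (J * C)) * (3 * R)"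
    proof -
      have "Tt (m+3) (Suc l) = fact (m+3) / (6 ^ Suc l * fact (Suc l) * fact (Suc j)) * 3 ^ Suc l"
        unfolding Tt_def using a d1 by simp
      then show ?thesis unfolding e1 l1 j1 power_Suc E_def[symmetric] R_def[symmetric] .
    qed
    have t2: "Tt (m+2) (Suc l) = (3 * real l + real j + 3) * (3 * real l + real j + 2) * A / (6 * E * (L * B) * C) * (3 * R)"
    proof -
      have "Tt (m+2) (Suc l) = fact (m+2) / (6 ^ Suc l * fact (Suc l) * fact j) * 3 ^ Suc l"
        unfolding Tt_def using a d1 by simp
      then show ?thesis unfolding e2 l1 C_def[symmetric] power_Suc E_def[symmetric] R_def[symmetric] .
    qed
    have t3: "Tt m l = A / (E * B * (J * C)) * R"
    proof -
      have "Tt m l = fact m / (6 ^ l * fact l * fact (Suc j)) * 3 ^ l"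
        unfolding Tt_def using a d1 by simp
      then show ?thesis unfolding e3 j1 B_def[symmetric] E_def[symmetric] R_def[symmetric] .
    qed
    have key: "(3 * real l + real j + 4) * (3 * real l + real j + 3) * (3 * real l + real j + 2) * A / (6 * E * (L * B) * (J * C)) * (3 * R)
       = (3 * real l + real j + 3) * (3 * real l + real j + 2) * A / (6 * E * (L * B) * C) * (3 * R)
         + 3 * ((3 * real l + real j + 3) * (3 * real l + real j + 2) / 2) * (A / (E * B * (J * C)) * R)"
      using pos apply (simp add: field_simps)
      apply (simp add: L_def J_def algebra_simps)
      done
    show ?thesis unfolding t1 t2 t3 c2' by (rule key)
  next
    case b
    define A where "A = (fact (3*l) :: real)"
    define B where "B = (fact l :: real)"
    define L where "L = real l + 1"
    define E where "E = (6::real) ^ l"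
    define R where "R = (3::real) ^ l"
    have pos: "A > 0" "B > 0" "L > 0" "E > 0" "R > 0"
      unfolding A_def B_def L_def E_def R_def by auto
    have e1: "fact (m+3) = (3 * real l + 3) * (3 * real l + 2) * (3 * real l + 1) * A"
      unfolding b A_def by (simp add: fact_Suc algebra_simps numeral_eq_Suc)
    have l1: "fact (Suc l) = L * B" unfolding B_def L_def by (simp add: fact_Suc algebra_simps)
    have c2': "real ((m+2) choose 2) = (3 * real l + 2) * (3 * real l + 1) / 2"
      using c2 b by (simp add: algebra_simps)
    have t1: "Tt (m+3) (Suc l) = (3 * real l + 3) * (3 * real l + 2) * (3 * real l + 1) * A / (6 * E * (L * B)) * (3 * R)"
    proof -
      have "Tt (m+3) (Suc l) = fact (m+3) / (6 ^ Suc l * fact (Suc l)) * 3 ^ Suc l"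
        unfolding Tt_def using b by simp
      then show ?thesis unfolding e1 l1 power_Suc E_def[symmetric] R_def[symmetric] .
    qed
    have t2: "Tt (m+2) (Suc l) = 0" unfolding Tt_def using b by simp
    have t3: "Tt m l = A / (E * B) * R"
      unfolding Tt_def A_def B_def E_def R_def using b by simp
    have key: "(3 * real l + 3) * (3 * real l + 2) * (3 * real l + 1) * A / (6 * E * (L * B)) * (3 * R)
       = 0 + 3 * ((3 * real l + 2) * (3 * real l + 1) / 2) * (A / (E * B) * R)"
      using pos apply (simp add: field_simps)
      apply (simp add: L_def algebra_simps)
      done
    show ?thesis unfolding t1 t2 t3 c2' by (rule key)
  next
    case c
    then show ?thesis unfolding Tt_def by simp
  qed
qed

lemma T_sum_ext:
  assumes "k div 3 < N"
  shows "(\<Sum>l<N. Tt k l) = (\<Sum>l = 0..k div 3. fact k / (6 ^ l * fact l * fact (k - 3 * l)) * 3 ^ l)"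
proof -
  have "(\<Sum>l<N. Tt k l) = (\<Sum>l = 0..k div 3. Tt k l)"
    by (rule sum.mono_neutral_right) (use assms in \<open>auto simp: Tt_def\<close>)
  also have "\<dots> = (\<Sum>l = 0..k div 3. fact k / (6 ^ l * fact l * fact (k - 3 * l)) * 3 ^ l)"
    by (rule sum.cong) (auto simp: Tt_def)
  finally show ?thesis .
qed

definition Gc :: "nat \<Rightarrow> real" where
  "Gc k = (\<Sum>l = 0..k div 3. fact k / (6 ^ l * fact l * fact (k - 3 * l)) * 3 ^ l)"

lemma F_Gc: "real (F k) = Gc k"
proof (induction k rule: less_induct)
  case (less k)
  have IH: "real (F j) = (\<Sum>l<N. Tt j l)" if "j < k" "j div 3 < N" for j N
    using less[OF that(1)] T_sum_ext[OF that(2)] by (simp add: Gc_def)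
  have goal: "real (F k) = (\<Sum>l<Suc k. Tt k l)"
  proof (cases "k < 3")
    case True
    then have "k = 0 \<or> k = 1 \<or> k = 2" by auto
    then show ?thesis by (auto simp: Tt_def numeral_eq_Suc)
  next
    case False
    then obtain m where m: "k = m + 3" by (metis add.commute le_Suc_ex not_less)
    have "real (F k) = real (F (m+2)) + 3 * real ((m+2) choose 2) * real (F m)"
    proof -
      from m have km: "k = Suc (m+2)" by simp
      have "F k = F (m+2) + 3*((m+2) choose 2) * F (m+2-2)" unfolding km by (rule F.simps(2))
      moreover have "m + 2 - 2 = m" by simp
      ultimately have "F k = F (m+2) + 3*((m+2) choose 2) * F m" by simp
      then show ?thesis by simp
    qed
    also have "real (F (m+2)) = (\<Sum>l<Suc (m+3). Tt (m+2) l)" using IH[of "m+2" "Suc (m+3)"] m by simp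
    also have "real (F m) = (\<Sum>l<m+3. Tt m l)" using IH[of m "m+3"] m by simp
    also have "(\<Sum>l<Suc (m+3). Tt (m+2) l) = Tt (m+2) 0 + (\<Sum>l<m+3. Tt (m+2) (Suc l))"
      by (rule sum.lessThan_Suc_shift)
    also have "(\<Sum>l<Suc k. Tt k l) = Tt k 0 + (\<Sum>l<m+3. Tt (m+3) (Suc l))"
      unfolding m by (rule sum.lessThan_Suc_shift)
    ultimately show ?thesis
      by (simp add: T_zero T_step sum.distrib sum_distrib_left m)
  qed
  then show ?case using T_sum_ext[of k "Suc k"] by (simp add: Gc_def)
qed





definition pm :: "'b set \<Rightarrow> 'b \<Rightarrow> ('b \<Rightarrow> 'b) set" where
  "pm B z = {h. (\<forall>x. x \<notin> B \<longrightarrow> h x = undefined) \<and>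
     (\<forall>x\<in>B. h x = z \<or> (h x \<in> B \<and> h (h x) = z \<and> (\<exists>!y. y \<in> B \<and> y \<noteq> x \<and> h y = h x)))}"

lemma pmI:
  assumes "\<And>x. x \<notin> B \<Longrightarrow> h x = undefined"
    and "\<And>x. x \<in> B \<Longrightarrow> h x \<noteq> z \<Longrightarrow> h x \<in> B \<and> h (h x) = z \<and> (\<exists>!y. y \<in> B \<and> y \<noteq> x \<and> h y = h x)"
  shows "h \<in> pm B z"
proof -
  have 1: "\<forall>x. x \<notin> B \<longrightarrow> h x = undefined" using assms(1) by simp
  have 2: "h x = z \<or> (h x \<in> B \<and> h (h x) = z \<and> (\<exists>!y. y \<in> B \<and> y \<noteq> x \<and> h y = h x))" if "x \<in> B" for x
  proof (cases "h x = z")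
    case True then show ?thesis by (rule disjI1)
  next
    case False show ?thesis using assms(2)[OF that False] by (rule disjI2)
  qed
  show ?thesis unfolding pm_def mem_Collect_eq using 1 2 by (intro conjI ballI allI) auto
qed

lemma pmD:
  assumes "h \<in> pm B z"
  shows "\<And>x. x \<notin> B \<Longrightarrow> h x = undefined"
    and "\<And>x. x \<in> B \<Longrightarrow> h x \<noteq> z \<Longrightarrow> h x \<in> B"
    and "\<And>x. x \<in> B \<Longrightarrow> h x \<noteq> z \<Longrightarrow> h (h x) = z"
    and "\<And>x. x \<in> B \<Longrightarrow> h x \<noteq> z \<Longrightarrow> \<exists>!y. y \<in> B \<and> y \<noteq> x \<and> h y = h x"
proof -
  have 0: "(\<forall>x. x \<notin> B \<longrightarrow> h x = undefined) \<and>
    (\<forall>x\<in>B. h x = z \<or> (h x \<in> B \<and> h (h x) = z \<and> (\<exists>!y. y \<in> B \<and> y \<noteq> x \<and> h y = h x)))"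
    using assms unfolding pm_def by (rule CollectD)
  note 1 = conjunct1[OF 0] and 2 = conjunct2[OF 0]
  show "\<And>x. x \<notin> B \<Longrightarrow> h x = undefined" using 1 by simp
  fix x assume "x \<in> B" "h x \<noteq> z"
  have d: "h x = z \<or> (h x \<in> B \<and> h (h x) = z \<and> (\<exists>!y. y \<in> B \<and> y \<noteq> x \<and> h y = h x))"
    using 2 \<open>x \<in> B\<close> by (rule bspec)
  have "h x \<in> B \<and> h (h x) = z \<and> (\<exists>!y. y \<in> B \<and> y \<noteq> x \<and> h y = h x)"
  proof (rule disjE[OF d])
    assume "h x = z" with \<open>h x \<noteq> z\<close> show ?thesis by contradiction
  next
    assume c: "h x \<in> B \<and> h (h x) = z \<and> (\<exists>!y. y \<in> B \<and> y \<noteq> x \<and> h y = h x)"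
    show ?thesis by (rule c)
  qed
  then show "h x \<in> B" "h (h x) = z" "\<exists>!y. y \<in> B \<and> y \<noteq> x \<and> h y = h x" by simp_all
qed

lemma pm_finite:
  assumes "finite B" shows "finite (pm B z)"
proof (rule finite_subset)
  show "pm B z \<subseteq> PiE B (\<lambda>_. insert z B)"
    by (auto simp: pm_def PiE_iff extensional_def)
  show "finite (PiE B (\<lambda>_. insert z B))" using assms by (simp add: finite_PiE)
qed

lemma pm_partner:
  assumes "h \<in> pm B z" "z \<notin> B" "y \<in> B" "c \<in> B" "h y = c"
  shows "h c = z" "\<exists>p. p \<in> B \<and> p \<noteq> y \<and> h p = c \<and> (\<forall>r\<in>B. h r = c \<longrightarrow> r = y \<or> r = p)"
proof -
  have ne: "h y \<noteq> z" using assms by auto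
  show "h c = z" using pmD(3)[OF assms(1) assms(3) ne] assms(5) by simp
  from pmD(4)[OF assms(1) assms(3) ne] obtain p where p: "p \<in> B" "p \<noteq> y" "h p = h y"
    and u: "\<And>r. r \<in> B \<and> r \<noteq> y \<and> h r = h y \<Longrightarrow> r = p" by blast
  show "\<exists>p. p \<in> B \<and> p \<noteq> y \<and> h p = c \<and> (\<forall>r\<in>B. h r = c \<longrightarrow> r = y \<or> r = p)"
  proof (intro exI conjI ballI impI)
    show "p \<in> B" "p \<noteq> y" using p by auto
    show "h p = c" using p assms(5) by simp
    fix r assume "r \<in> B" "h r = c"
    then show "r = y \<or> r = p" using u[of r] assms(5) by auto
  qed
qed





definition build :: "'b \<Rightarrow> 'b set \<Rightarrow> 'b \<Rightarrow> ('b \<Rightarrow> 'b) \<Rightarrow> ('b \<Rightarrow> 'b)" where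
  "build z T c g = (\<lambda>y. if y \<in> T then (if y = c then z else c) else g y)"

definition recov :: "'b \<Rightarrow> 'b set \<Rightarrow> 'b \<Rightarrow> ('b \<Rightarrow> 'b) \<Rightarrow> 'b set \<times> 'b \<times> ('b \<Rightarrow> 'b)" where
  "recov z B x h = (let c = (if h x = z then x else h x); T = {y\<in>B. y = c \<or> h y = c}
     in (T, c, (\<lambda>y. if y \<in> B - T then h y else undefined)))"

lemma three_elems:
  assumes "card T = 3" "c \<in> T"
  obtains a b where "T = {c, a, b}" "a \<noteq> b" "a \<noteq> c" "b \<noteq> c"
proof -
  have "finite T" using assms(1) by (metis card.infinite zero_neq_numeral)
  then have "card (T - {c}) = 2" using assms by simp
  then obtain a b where ab: "T - {c} = {a, b}" "a \<noteq> b" by (auto simp: card_2_iff)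
  then have "T = {c, a, b}" using assms(2) by blast
  moreover have "a \<noteq> c" "b \<noteq> c" using ab by blast+
  ultimately show ?thesis using that ab(2) by blast
qed

lemma build_pm:
  assumes z: "z \<notin> B" and TB: "T \<subseteq> B" and cT: "card T = 3" "c \<in> T" and g: "g \<in> pm (B - T) z"
  shows "build z T c g \<in> pm B z"
proof -
  obtain a b where T: "T = {c, a, b}" and ab: "a \<noteq> b" "a \<noteq> c" "b \<noteq> c"
    using three_elems[OF cT] by blast
  define h where "h = build z T c g"
  have hT: "h y = (if y = c then z else c)" if "y \<in> T" for y using that by (simp add: h_def build_def)
  have hO: "h y = g y" if "y \<notin> T" for y using that by (simp add: h_def build_def)
  have cB: "c \<in> B" using TB cT by auto
  have gv: "g y = z \<or> g y \<in> B - T" if "y \<in> B - T" for y using pmD(2)[OF g that] by blast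
  have hc: "r = a \<or> r = b" if "r \<in> B" "h r = c" for r
  proof (cases "r \<in> T")
    case True
    then have "r \<noteq> c" using that hT[of r] cB z by auto
    then show ?thesis using True T by auto
  next
    case False
    then have grc: "g r = c" using hO[OF False] that(2) by simp
    have "r \<in> B - T" using that(1) False by simp
    then have "g r = z \<or> g r \<in> B - T" by (rule gv)
    then have False using grc cT(2) cB z by blast
    then show ?thesis ..
  qed
  have "h \<in> pm B z"
  proof (rule pmI)
    fix y assume "y \<notin> B"
    then have "y \<notin> T" "y \<notin> B - T" using TB by auto
    then show "h y = undefined" using hO pmD(1)[OF g] by simp
  next
    fix y assume y: "y \<in> B" "h y \<noteq> z"
    show "h y \<in> B \<and> h (h y) = z \<and> (\<exists>!w. w \<in> B \<and> w \<noteq> y \<and> h w = h y)"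
    proof (cases "y \<in> T")
      case True
      then have yc: "y \<noteq> c" "h y = c" using hT[of y] y(2) by auto
      have hcz: "h c = z" using hT[of c] cT(2) by simp
      have yab: "y = a \<or> y = b" using True yc T by auto
      define oth where "oth = (if y = a then b else a)"
      have oB: "oth \<in> B" "oth \<noteq> y" "h oth = c" using TB T ab yab hT by (auto simp: oth_def)
      have "\<exists>!w. w \<in> B \<and> w \<noteq> y \<and> h w = h y"
      proof (rule ex1I[where a=oth])
        show "oth \<in> B \<and> oth \<noteq> y \<and> h oth = h y" using oB yc by simp
        fix w assume "w \<in> B \<and> w \<noteq> y \<and> h w = h y"
        then have "w = a \<or> w = b" "w \<noteq> y" using hc[of w] yc by auto
        then show "w = oth" using yab ab by (auto simp: oth_def)
      qed
      then show ?thesis using yc cB hcz by simp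
    next
      case False
      then have yBT: "y \<in> B - T" using y by simp
      have hy: "h y = g y" using hO[OF False] .
      have gnz: "g y \<noteq> z" using y(2) hy by simp
      have gy: "g y \<in> B - T" using gv[OF yBT] gnz by blast
      have ggy: "g (g y) = z" using pmD(3)[OF g yBT gnz] .
      have "g y \<notin> T" using gy by simp
      then have "h (g y) = g (g y)" by (rule hO)
      then have hhy: "h (h y) = z" using hy ggy by simp
      have ex: "\<exists>!w. w \<in> B - T \<and> w \<noteq> y \<and> g w = g y" using pmD(4)[OF g yBT gnz] .
      then obtain w where w: "w \<in> B - T \<and> w \<noteq> y \<and> g w = g y"
        and wu: "\<And>r. r \<in> B - T \<and> r \<noteq> y \<and> g r = g y \<Longrightarrow> r = w"
        by (rule ex1E) blast
      have "\<exists>!w. w \<in> B \<and> w \<noteq> y \<and> h w = h y"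
      proof (rule ex1I[where a=w])
        have "w \<notin> T" using w by simp
        then have "h w = g w" by (rule hO)
        then show "w \<in> B \<and> w \<noteq> y \<and> h w = h y" using w hy by simp
        fix r assume r: "r \<in> B \<and> r \<noteq> y \<and> h r = h y"
        have "r \<notin> T"
        proof
          assume "r \<in> T"
          then have "h r = z \<or> h r = c" using hT[of r] by (simp split: if_splits)
          moreover have "h r \<in> B - T" using r hy gy by simp
          ultimately show False using z cT(2) by blast
        qed
        then have "h r = g r" by (rule hO)
        then have "r \<in> B - T \<and> r \<noteq> y \<and> g r = g y" using r hy \<open>r \<notin> T\<close> by simp
        then show "r = w" by (rule wu)
      qed
      then show ?thesis using hy gy hhy by simp
    qed
  qed
  then show ?thesis by (simp add: h_def)
qed


lemma build_notC1:
  assumes z: "z \<notin> B" and TB: "T \<subseteq> B" and cT: "card T = 3" "c \<in> T" and xT: "x \<in> T"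
  shows "\<not> (build z T c g x = z \<and> (\<forall>y\<in>B. build z T c g y \<noteq> x))"
proof -
  obtain a b where T: "T = {c, a, b}" and ab: "a \<noteq> b" "a \<noteq> c" "b \<noteq> c"
    using three_elems[OF cT] by blast
  show ?thesis
  proof (cases "x = c")
    case True
    have "a \<in> B" using TB T by auto
    moreover have "build z T c g a = x" using True ab T by (simp add: build_def)
    ultimately show ?thesis by blast
  next
    case False
    then have "build z T c g x = c" using xT by (simp add: build_def)
    moreover have "c \<noteq> z" using z TB cT(2) by auto
    ultimately show ?thesis by simp
  qed
qed

lemma recov_props:
  assumes z: "z \<notin> B" and h: "h \<in> pm B z" and xB: "x \<in> B"
    and nC1: "\<not> (h x = z \<and> (\<forall>y\<in>B. h y \<noteq> x))"
  defines "c \<equiv> (if h x = z then x else h x)"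
  defines "T \<equiv> {y\<in>B. y = c \<or> h y = c}"
  defines "g \<equiv> (\<lambda>y. if y \<in> B - T then h y else undefined)"
  shows "recov z B x h = (T, c, g)" "T \<subseteq> B" "x \<in> T" "card T = 3" "c \<in> T"
    "g \<in> pm (B - T) z" "build z T c g = h"
proof -
  show "recov z B x h = (T, c, g)" by (simp add: recov_def c_def T_def g_def Let_def)
  show TB: "T \<subseteq> B" by (auto simp: T_def)
  obtain y0 where y0: "y0 \<in> B" "h y0 = c" "c \<in> B" "y0 \<noteq> c"
  proof (cases "h x = z")
    case True
    then obtain y where "y \<in> B" "h y = x" using nC1 by blast
    moreover have "y \<noteq> x" using True \<open>h y = x\<close> xB z by auto
    ultimately show ?thesis using that True xB by (simp add: c_def)
  next
    case False
    have "h x \<in> B" using pmD(2)[OF h xB False] .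
    moreover have "h x \<noteq> x" using pmD(3)[OF h xB False] False by auto
    ultimately show ?thesis using that False xB by (simp add: c_def)
  qed
  have hc: "h c = z" using pm_partner(1)[OF h z y0(1) y0(3) y0(2)] .
  obtain p where p: "p \<in> B" "p \<noteq> y0" "h p = c" and pu: "\<forall>r\<in>B. h r = c \<longrightarrow> r = y0 \<or> r = p"
    using pm_partner(2)[OF h z y0(1) y0(3) y0(2)] by blast
  have pc: "p \<noteq> c" using p(3) hc z y0(3) by auto
  have Teq: "T = {c, y0, p}"
  proof
    show "T \<subseteq> {c, y0, p}" using pu by (auto simp: T_def)
    show "{c, y0, p} \<subseteq> T" using y0 p by (auto simp: T_def)
  qed
  show "card T = 3" using Teq y0(4) pc p(2) by auto
  show "c \<in> T" using Teq by simp
  show "x \<in> T"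
  proof (cases "h x = z")
    case True then show ?thesis using xB by (simp add: T_def c_def)
  next
    case False then show ?thesis using xB by (simp add: T_def c_def)
  qed
  have hT: "h r = c \<or> h r = z" if "r \<in> T" for r
    using that hc by (auto simp: T_def)
  show "g \<in> pm (B - T) z"
  proof (rule pmI)
    fix w assume "w \<notin> B - T" then show "g w = undefined" by (auto simp: g_def)
  next
    fix w assume w: "w \<in> B - T" "g w \<noteq> z"
    have gw: "g w = h w" using w(1) by (simp add: g_def)
    have wB: "w \<in> B" using w(1) by simp
    have hnz: "h w \<noteq> z" using w(2) gw by simp
    have hwB: "h w \<in> B" using pmD(2)[OF h wB hnz] .
    have hhw: "h (h w) = z" using pmD(3)[OF h wB hnz] .
    have hwc: "h w \<noteq> c" using w(1) by (auto simp: T_def)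
    have hwT: "h w \<notin> T"
    proof
      assume "h w \<in> T"
      then have "h w = c \<or> h (h w) = c" by (simp add: T_def)
      then show False using hwc hhw z y0(3) by auto
    qed
    have g1: "g w \<in> B - T" using gw hwB hwT by simp
    have g2: "g (g w) = z" using gw hwB hwT hhw by (simp add: g_def)
    have ex: "\<exists>!y. y \<in> B \<and> y \<noteq> w \<and> h y = h w" using pmD(4)[OF h wB hnz] .
    then obtain w' where w': "w' \<in> B \<and> w' \<noteq> w \<and> h w' = h w"
        and wu: "\<And>r. r \<in> B \<and> r \<noteq> w \<and> h r = h w \<Longrightarrow> r = w'"
      by (rule ex1E) blast
    have w'T: "w' \<notin> T"
    proof
      assume "w' \<in> T"
      then have "h w' = c \<or> h w' = z" by (rule hT)
      then show False using w' hwc hnz by auto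
    qed
    have "\<exists>!y. y \<in> B - T \<and> y \<noteq> w \<and> g y = g w"
    proof (rule ex1I[where a=w'])
      show "w' \<in> B - T \<and> w' \<noteq> w \<and> g w' = g w" using w' w'T gw by (simp add: g_def)
      fix r assume r: "r \<in> B - T \<and> r \<noteq> w \<and> g r = g w"
      then have "r \<in> B \<and> r \<noteq> w \<and> h r = h w" using gw by (auto simp: g_def)
      then show "r = w'" by (rule wu)
    qed
    then show "g w \<in> B - T \<and> g (g w) = z \<and> (\<exists>!y. y \<in> B - T \<and> y \<noteq> w \<and> g y = g w)"
      using g1 g2 by simp
  qed
  show "build z T c g = h"
  proof
    fix y show "build z T c g y = h y"
    proof (cases "y \<in> T")
      case True
      show ?thesis
      proof (cases "y = c")
        case True then show ?thesis using \<open>y \<in> T\<close> hc by (simp add: build_def)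
      next
        case False
        then have "h y = c" using \<open>y \<in> T\<close> by (simp add: T_def)
        then show ?thesis using \<open>y \<in> T\<close> False by (simp add: build_def)
      qed
    next
      case False
      show ?thesis
      proof (cases "y \<in> B")
        case True then show ?thesis using False by (simp add: build_def g_def)
      next
        case nB: False then show ?thesis using False pmD(1)[OF h nB] by (simp add: build_def g_def)
      qed
    qed
  qed
qed

lemma recov_build:
  assumes z: "z \<notin> B" and TB: "T \<subseteq> B" and cT: "card T = 3" "c \<in> T" and xT: "x \<in> T"
    and g: "g \<in> pm (B - T) z"
  shows "recov z B x (build z T c g) = (T, c, g)"
proof -
  define h where "h = build z T c g"
  have cB: "c \<in> B" using TB cT(2) by auto
  have cz: "c \<noteq> z" using cB z by auto
  have c': "(if h x = z then x else h x) = c"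
  proof (cases "x = c")
    case True then show ?thesis using xT by (simp add: h_def build_def)
  next
    case False then show ?thesis using xT cz by (simp add: h_def build_def)
  qed
  have T': "{y\<in>B. y = c \<or> h y = c} = T"
  proof
    show "T \<subseteq> {y\<in>B. y = c \<or> h y = c}" using TB by (auto simp: h_def build_def)
    show "{y\<in>B. y = c \<or> h y = c} \<subseteq> T"
    proof
      fix y assume y: "y \<in> {y\<in>B. y = c \<or> h y = c}"
      show "y \<in> T"
      proof (rule ccontr)
        assume nT: "y \<notin> T"
        then have yBT: "y \<in> B - T" using y by simp
        have "h y = g y" using nT by (simp add: h_def build_def)
        moreover have "g y = z \<or> g y \<in> B - T" using pmD(2)[OF g yBT] by blast
        ultimately have "h y \<noteq> c" using cz cT(2) by auto
        moreover have "y \<noteq> c" using nT cT(2) by auto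
        ultimately show False using y by simp
      qed
    qed
  qed
  have g': "(\<lambda>y. if y \<in> B - T then h y else undefined) = g"
  proof
    fix y show "(if y \<in> B - T then h y else undefined) = g y"
      using pmD(1)[OF g, of y] by (auto simp: h_def build_def)
  qed
  show ?thesis unfolding recov_def Let_def c' T' g' h_def[symmetric] ..
qed





lemma pm_empty: "pm {} z = {(\<lambda>_. undefined)}"
proof
  show "pm {} z \<subseteq> {(\<lambda>_. undefined)}" using pmD(1) by fastforce
  show "{(\<lambda>_. undefined)} \<subseteq> pm {} z" by (auto intro: pmI)
qed

lemma C1_bij:
  assumes z: "z \<notin> B" and xB: "x \<in> B"
  shows "bij_betw (\<lambda>h. h(x := undefined)) {h \<in> pm B z. h x = z \<and> (\<forall>y\<in>B. h y \<noteq> x)} (pm (B - {x}) z)"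
proof (rule bij_betw_byWitness[where f'="\<lambda>h. h(x := z)"])
  let ?C1 = "{h \<in> pm B z. h x = z \<and> (\<forall>y\<in>B. h y \<noteq> x)}"
  show "\<forall>h\<in>?C1. (h(x := undefined))(x := z) = h" by auto
  show "\<forall>g\<in>pm (B - {x}) z. (g(x := z))(x := undefined) = g"
  proof
    fix g assume g: "g \<in> pm (B - {x}) z"
    have "g x = undefined" using pmD(1)[OF g] by simp
    then show "(g(x := z))(x := undefined) = g" by auto
  qed
  show "(\<lambda>h. h(x := undefined)) ` ?C1 \<subseteq> pm (B - {x}) z"
  proof
    fix h' assume "h' \<in> (\<lambda>h. h(x := undefined)) ` ?C1"
    then obtain h where h: "h \<in> pm B z" "h x = z" "\<forall>y\<in>B. h y \<noteq> x" and h': "h' = h(x := undefined)" by auto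
    show "h' \<in> pm (B - {x}) z"
    proof (rule pmI)
      fix y assume "y \<notin> B - {x}"
      then show "h' y = undefined" using pmD(1)[OF h(1), of y] h' by (cases "y = x") auto
    next
      fix y assume y: "y \<in> B - {x}" "h' y \<noteq> z"
      have yB: "y \<in> B" "y \<noteq> x" using y by auto
      have hy: "h' y = h y" using yB h' by simp
      have hnz: "h y \<noteq> z" using y(2) hy by simp
      have hyB: "h y \<in> B" using pmD(2)[OF h(1) yB(1) hnz] .
      have hyx: "h y \<noteq> x" using h(3) yB(1) by blast
      have hhy: "h' (h' y) = z" using pmD(3)[OF h(1) yB(1) hnz] hy hyx h' by simp
      have "\<exists>!w. w \<in> B \<and> w \<noteq> y \<and> h w = h y" using pmD(4)[OF h(1) yB(1) hnz] .
      then obtain w where w: "w \<in> B \<and> w \<noteq> y \<and> h w = h y"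
        and wu: "\<And>r. r \<in> B \<and> r \<noteq> y \<and> h r = h y \<Longrightarrow> r = w" by (rule ex1E) blast
      have wx: "w \<noteq> x" using w h(2) hnz by auto
      have "\<exists>!w. w \<in> B - {x} \<and> w \<noteq> y \<and> h' w = h' y"
      proof (rule ex1I[where a=w])
        show "w \<in> B - {x} \<and> w \<noteq> y \<and> h' w = h' y" using w wx hy h' by simp
        fix r assume r: "r \<in> B - {x} \<and> r \<noteq> y \<and> h' r = h' y"
        then have "r \<in> B \<and> r \<noteq> y \<and> h r = h y" using hy h' by auto
        then show "r = w" by (rule wu)
      qed
      then show "h' y \<in> B - {x} \<and> h' (h' y) = z \<and> (\<exists>!w. w \<in> B - {x} \<and> w \<noteq> y \<and> h' w = h' y)"
        using hy hyB hyx hhy by simp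
    qed
  qed
  show "(\<lambda>g. g(x := z)) ` pm (B - {x}) z \<subseteq> ?C1"
  proof
    fix h assume "h \<in> (\<lambda>g. g(x := z)) ` pm (B - {x}) z"
    then obtain g where g: "g \<in> pm (B - {x}) z" and hg: "h = g(x := z)" by auto
    have xz: "x \<noteq> z" using xB z by auto
    have gv: "g y = z \<or> g y \<in> B - {x}" if "y \<in> B - {x}" for y using pmD(2)[OF g that] by blast
    have hpm: "h \<in> pm B z"
    proof (rule pmI)
      fix y assume "y \<notin> B"
      then show "h y = undefined" using pmD(1)[OF g, of y] hg xB by auto
    next
      fix y assume y: "y \<in> B" "h y \<noteq> z"
      have yx: "y \<noteq> x" using y(2) hg by auto
      have yB: "y \<in> B - {x}" using y(1) yx by simp
      have hy: "h y = g y" using hg yx by simp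
      have gnz: "g y \<noteq> z" using y(2) hy by simp
      have gyB: "g y \<in> B - {x}" using pmD(2)[OF g yB gnz] .
      have hhy: "h (h y) = z" using pmD(3)[OF g yB gnz] hy gyB hg by auto
      have "\<exists>!w. w \<in> B - {x} \<and> w \<noteq> y \<and> g w = g y" using pmD(4)[OF g yB gnz] .
      then obtain w where w: "w \<in> B - {x} \<and> w \<noteq> y \<and> g w = g y"
        and wu: "\<And>r. r \<in> B - {x} \<and> r \<noteq> y \<and> g r = g y \<Longrightarrow> r = w" by (rule ex1E) blast
      have "\<exists>!w. w \<in> B \<and> w \<noteq> y \<and> h w = h y"
      proof (rule ex1I[where a=w])
        show "w \<in> B \<and> w \<noteq> y \<and> h w = h y" using w hy hg by auto
        fix r assume r: "r \<in> B \<and> r \<noteq> y \<and> h r = h y"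
        have rx: "r \<noteq> x" using r hg hy gnz by auto
        then have "r \<in> B - {x} \<and> r \<noteq> y \<and> g r = g y" using r hy hg by auto
        then show "r = w" by (rule wu)
      qed
      then show "h y \<in> B \<and> h (h y) = z \<and> (\<exists>!w. w \<in> B \<and> w \<noteq> y \<and> h w = h y)"
        using hy gyB hhy by simp
    qed
    have "\<forall>y\<in>B. h y \<noteq> x"
    proof
      fix y assume "y \<in> B"
      show "h y \<noteq> x"
      proof (cases "y = x")
        case True then show ?thesis using hg xz by simp
      next
        case False
        then have "g y = z \<or> g y \<in> B - {x}" using gv \<open>y \<in> B\<close> by simp
        then show ?thesis using hg False xz by auto
      qed
    qed
    then show "h \<in> ?C1" using hpm hg by simp
  qed
qed


lemma card_Tx:
  assumes "finite B" "x \<in> B"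
  shows "card {T. T \<subseteq> B \<and> x \<in> T \<and> card T = 3} = card (B - {x}) choose 2"
proof -
  have eq: "{T. T \<subseteq> B \<and> x \<in> T \<and> card T = 3} = insert x ` {U. U \<subseteq> B - {x} \<and> card U = 2}"
  proof
    show "{T. T \<subseteq> B \<and> x \<in> T \<and> card T = 3} \<subseteq> insert x ` {U. U \<subseteq> B - {x} \<and> card U = 2}"
    proof
      fix T assume T: "T \<in> {T. T \<subseteq> B \<and> x \<in> T \<and> card T = 3}"
      then have "finite T" using assms(1) finite_subset by auto
      then have "card (T - {x}) = 2" using T by simp
      moreover have "T = insert x (T - {x})" "T - {x} \<subseteq> B - {x}" using T by auto
      ultimately show "T \<in> insert x ` {U. U \<subseteq> B - {x} \<and> card U = 2}" by blast
    qed
    show "insert x ` {U. U \<subseteq> B - {x} \<and> card U = 2} \<subseteq> {T. T \<subseteq> B \<and> x \<in> T \<and> card T = 3}"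
    proof
      fix T assume "T \<in> insert x ` {U. U \<subseteq> B - {x} \<and> card U = 2}"
      then obtain U where U: "U \<subseteq> B - {x}" "card U = 2" and T: "T = insert x U" by auto
      have "finite U" using U(2) by (metis card.infinite zero_neq_numeral)
      moreover have "x \<notin> U" using U(1) by auto
      ultimately have "card T = 3" using T U(2) by simp
      then show "T \<in> {T. T \<subseteq> B \<and> x \<in> T \<and> card T = 3}" using T U(1) assms(2) by auto
    qed
  qed
  have inj: "inj_on (insert x) {U. U \<subseteq> B - {x} \<and> card U = 2}"
  proof (rule inj_onI)
    fix U V assume "U \<in> {U. U \<subseteq> B - {x} \<and> card U = 2}" "V \<in> {U. U \<subseteq> B - {x} \<and> card U = 2}"
      "insert x U = insert x V"
    moreover have "x \<notin> U" "x \<notin> V" using calculation by auto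
    ultimately show "U = V" by (metis insert_ident)
  qed
  show ?thesis unfolding eq card_image[OF inj] using n_subsets[of "B - {x}" 2] assms(1) by simp
qed

lemma pm_card:
  assumes "finite B" "z \<notin> B"
  shows "card (pm B z) = F (card B)"
  using assms
proof (induction "card B" arbitrary: B rule: less_induct)
  case less
  show ?case
  proof (cases "B = {}")
    case True then show ?thesis by (simp add: pm_empty)
  next
    case False
    then obtain x where xB: "x \<in> B" by auto
    define m where "m = card (B - {x})"
    have cB: "card B = Suc m" using less.prems(1) xB by (simp add: m_def card_Suc_Diff1 card_gt_0_iff[symmetric]) (metis card_gt_0_iff empty_iff Suc_pred)
    define C1 where "C1 = {h \<in> pm B z. h x = z \<and> (\<forall>y\<in>B. h y \<noteq> x)}"
    define Tx where "Tx = {T. T \<subseteq> B \<and> x \<in> T \<and> card T = 3}"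
    define Dom where "Dom = (SIGMA T:Tx. T \<times> pm (B - T) z)"
    have finpm: "finite (pm B z)" using pm_finite[OF less.prems(1)] .
    have C1sub: "C1 \<subseteq> pm B z" by (auto simp: C1_def)
    have "card C1 = card (pm (B - {x}) z)"
      using bij_betw_same_card[OF C1_bij[OF less.prems(2) xB]] by (simp add: C1_def)
    also have "\<dots> = F m" unfolding m_def
      by (rule less.hyps) (use less.prems cB in \<open>auto simp: m_def\<close>)
    finally have cC1: "card C1 = F m" .
    have bij: "bij_betw (\<lambda>(T, c, g). build z T c g) Dom (pm B z - C1)"
    proof (rule bij_betw_byWitness[where f'="recov z B x"])
      show "\<forall>a\<in>Dom. recov z B x ((\<lambda>(T, c, g). build z T c g) a) = a"
      proof
        fix a assume "a \<in> Dom"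
        then obtain T c g where a: "a = (T, c, g)" "T \<subseteq> B" "x \<in> T" "card T = 3" "c \<in> T" "g \<in> pm (B - T) z"
          by (auto simp: Dom_def Tx_def)
        show "recov z B x ((\<lambda>(T, c, g). build z T c g) a) = a"
          using recov_build[OF less.prems(2) a(2) a(4) a(5) a(3) a(6)] a(1) by simp
      qed
      show "\<forall>h\<in>pm B z - C1. (\<lambda>(T, c, g). build z T c g) (recov z B x h) = h"
      proof
        fix h assume h: "h \<in> pm B z - C1"
        then have h1: "h \<in> pm B z" and h2: "\<not> (h x = z \<and> (\<forall>y\<in>B. h y \<noteq> x))" by (auto simp: C1_def)
        note R = recov_props[OF less.prems(2) h1 xB h2]
        show "(\<lambda>(T, c, g). build z T c g) (recov z B x h) = h" using R(1) R(7) by simp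
      qed
      show "(\<lambda>(T, c, g). build z T c g) ` Dom \<subseteq> pm B z - C1"
      proof
        fix h assume "h \<in> (\<lambda>(T, c, g). build z T c g) ` Dom"
        then obtain T c g where a: "T \<subseteq> B" "x \<in> T" "card T = 3" "c \<in> T" "g \<in> pm (B - T) z"
          and h: "h = build z T c g"
          by (auto simp: Dom_def Tx_def)
        have "h \<in> pm B z" using build_pm[OF less.prems(2) a(1) a(3) a(4) a(5)] h by simp
        moreover have "h \<notin> C1" using build_notC1[OF less.prems(2) a(1) a(3) a(4) a(2)] h
          by (simp add: C1_def)
        ultimately show "h \<in> pm B z - C1" by simp
      qed
      show "recov z B x ` (pm B z - C1) \<subseteq> Dom"
      proof
        fix a assume "a \<in> recov z B x ` (pm B z - C1)"
        then obtain h where h: "h \<in> pm B z - C1" and a: "a = recov z B x h" by auto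
        then have h1: "h \<in> pm B z" and h2: "\<not> (h x = z \<and> (\<forall>y\<in>B. h y \<noteq> x))" by (auto simp: C1_def)
        note R = recov_props[OF less.prems(2) h1 xB h2]
        show "a \<in> Dom" unfolding a R(1) Dom_def Tx_def using R(2-6) by simp
      qed
    qed
    have finTx: "finite Tx" unfolding Tx_def using less.prems(1) by (rule rev_finite_subset[OF finite_Pow_iff[THEN iffD2]]) auto
    have cT: "card (T \<times> pm (B - T) z) = 3 * F (m - 2)" if "T \<in> Tx" for T
    proof -
      have T: "T \<subseteq> B" "card T = 3" using that by (auto simp: Tx_def)
      have finT: "finite T" using T less.prems(1) finite_subset by auto
      have cBT: "card (B - T) = m - 2" using card_Diff_subset[OF finT T(1)] T(2) cB by simp
      have "card (pm (B - T) z) = F (card (B - T))"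
        by (rule less.hyps) (use less.prems T cBT cB in auto)
      then show ?thesis using T(2) cBT finT pm_finite[of "B - T" z] less.prems(1)
        by (simp add: card_cartesian_product)
    qed
    have "card (pm B z - C1) = card Dom" using bij_betw_same_card[OF bij] by simp
    also have "\<dots> = (\<Sum>T\<in>Tx. card (T \<times> pm (B - T) z))" unfolding Dom_def
    proof (rule card_SigmaI[OF finTx])
      show "\<forall>a\<in>Tx. finite (a \<times> pm (B - a) z)"
        using less.prems(1) by (auto simp: Tx_def intro: finite_subset pm_finite)
    qed
    also have "\<dots> = card Tx * (3 * F (m - 2))" using cT by simp
    also have "card Tx = m choose 2" unfolding Tx_def m_def using card_Tx[OF less.prems(1) xB] .
    finally have cC2: "card (pm B z - C1) = (m choose 2) * (3 * F (m - 2))" .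
    have "card (pm B z) = card C1 + card (pm B z - C1)"
      using card_Diff_subset[OF finite_subset[OF C1sub finpm] C1sub] card_mono[OF finpm C1sub] by simp
    then show ?thesis using cC1 cC2 cB by simp
  qed
qed





definition Phi :: "'a set set \<times> ('a set \<Rightarrow> 'a set) \<Rightarrow> ('a set \<times> 'a set) set" where
  "Phi = (\<lambda>(P, h). (\<lambda>S. (S, h S)) ` P)"

definition Psi :: "('a set \<times> 'a set) set \<Rightarrow> 'a set set \<times> ('a set \<Rightarrow> 'a set)" where
  "Psi SS = (fst ` SS, (\<lambda>S. if S \<in> fst ` SS then (THE H. (S, H) \<in> SS) else undefined))"

lemma Phi_polestar:
  assumes P: "partition_on X P" and h: "h \<in> pm P {}"
  shows "polestar_system X (Phi (P, h))"
proof -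
  let ?SS = "(\<lambda>S. (S, h S)) ` P"
  note d = partD[OF P]
  have hv: "h S = {} \<or> (h S \<in> P \<and> h (h S) = {})" if "S \<in> P" for S
    using pmD(2,3)[OF h that] by blast
  have sps: "set_pair_system X ?SS"
    unfolding set_pair_system_def
  proof (rule ballI)
    fix p assume "p \<in> ?SS"
    then obtain S where S: "S \<in> P" and p: "p = (S, h S)" by auto
    have "S \<subseteq> X" using S d(1) by auto
    moreover have "h S \<subseteq> X" using hv[OF S] d(1) by auto
    moreover have "S \<noteq> {}" using S d(3) by auto
    moreover have "S \<inter> h S = {}"
    proof (cases "h S = {}")
      case False
      then have "h S \<in> P" "h (h S) = {}" using hv[OF S] by auto
      moreover have "h S \<noteq> S" using calculation(2) False by auto
      ultimately show ?thesis using d(2)[OF S] by auto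
    qed simp
    ultimately show "case p of (S, H) \<Rightarrow> S \<subseteq> X \<and> H \<subseteq> X \<and> S \<noteq> {} \<and> S \<inter> H = {}"
      using p by simp
  qed
  have "partition_on X (fst ` ?SS)" using P by (simp add: image_image)
  moreover have "\<forall>p\<in>?SS. \<forall>q\<in>?SS. p \<noteq> q \<longrightarrow> fst p \<noteq> fst q" by auto
  moreover have "\<forall>(S, H) \<in> ?SS. H \<noteq> {} \<longrightarrow> (H, {}) \<in> ?SS \<and> (\<exists>!q. q \<in> ?SS \<and> q \<noteq> (S, H) \<and> snd q = H)"
  proof (rule ballI)
    fix p assume "p \<in> ?SS"
    then obtain S where S: "S \<in> P" and p: "p = (S, h S)" by auto
    show "case p of (S, H) \<Rightarrow> H \<noteq> {} \<longrightarrow> (H, {}) \<in> ?SS \<and> (\<exists>!q. q \<in> ?SS \<and> q \<noteq> (S, H) \<and> snd q = H)"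
    unfolding p prod.case
    proof
    assume ne: "h S \<noteq> {}"
    have hS: "h S \<in> P" "h (h S) = {}" using hv[OF S] ne by auto
    have A: "(h S, {}) \<in> ?SS" using hS by (metis (no_types, lifting) image_eqI)
    have "\<exists>!y. y \<in> P \<and> y \<noteq> S \<and> h y = h S" using pmD(4)[OF h S ne] .
    then obtain y where y: "y \<in> P \<and> y \<noteq> S \<and> h y = h S"
      and yu: "\<And>r. r \<in> P \<and> r \<noteq> S \<and> h r = h S \<Longrightarrow> r = y" by (rule ex1E) blast
    have "\<exists>!q. q \<in> ?SS \<and> q \<noteq> (S, h S) \<and> snd q = h S"
    proof (rule ex1I[where a="(y, h y)"])
      show "(y, h y) \<in> ?SS \<and> (y, h y) \<noteq> (S, h S) \<and> snd (y, h y) = h S" using y by auto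
      fix q assume q: "q \<in> ?SS \<and> q \<noteq> (S, h S) \<and> snd q = h S"
      then obtain r where r: "r \<in> P" "q = (r, h r)" by auto
      then have "r \<in> P \<and> r \<noteq> S \<and> h r = h S" using q by auto
      then have "r = y" by (rule yu)
      then show "q = (y, h y)" using r by simp
    qed
    then show "(h S, {}) \<in> ?SS \<and> (\<exists>!q. q \<in> ?SS \<and> q \<noteq> (S, h S) \<and> snd q = h S)"
      using A by simp
    qed
  qed
  ultimately show ?thesis using sps unfolding polestar_system_def Phi_def by simp
qed


lemma Psi_props:
  assumes ps: "polestar_system X SS"
  shows "partition_on X (fst (Psi SS))" "snd (Psi SS) \<in> pm (fst (Psi SS)) {}" "Phi (Psi SS) = SS"
proof -
  define P where "P = fst ` SS"
  define h where "h = (\<lambda>S. if S \<in> fst ` SS then (THE H. (S, H) \<in> SS) else undefined)"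
  have PsiE: "Psi SS = (P, h)" by (simp add: Psi_def P_def h_def)
  have ps0: "partition_on X (fst ` SS) \<and> (\<forall>p\<in>SS. \<forall>q\<in>SS. p \<noteq> q \<longrightarrow> fst p \<noteq> fst q) \<and>
     (\<forall>(S, H) \<in> SS. H \<noteq> {} \<longrightarrow> (H, {}) \<in> SS \<and> (\<exists>!q. q \<in> SS \<and> q \<noteq> (S, H) \<and> snd q = H))"
    using ps unfolding polestar_system_def by (rule conjunct2)
  have part: "partition_on X P" unfolding P_def by (rule conjunct1[OF ps0])
  note injA = conjunct1[OF conjunct2[OF ps0]]
  note PL3A = conjunct2[OF conjunct2[OF ps0]]
  have fm: "a \<in> P" if "(a, b) \<in> SS" for a b
    unfolding P_def by (rule image_eqI[where x="(a, b)"]) (simp_all add: that)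
  have inj: "p = q" if "p \<in> SS" "q \<in> SS" "fst p = fst q" for p q
  proof (rule ccontr)
    assume "p \<noteq> q"
    then have "fst p \<noteq> fst q" using injA that(1,2) by blast
    then show False using that(3) by contradiction
  qed
  have PL3: "(H, {}) \<in> SS \<and> (\<exists>!q. q \<in> SS \<and> q \<noteq> (S, H) \<and> snd q = H)" if "(S, H) \<in> SS" "H \<noteq> {}" for S H
  proof -
    have "case (S, H) of (S, H) \<Rightarrow> H \<noteq> {} \<longrightarrow> (H, {}) \<in> SS \<and> (\<exists>!q. q \<in> SS \<and> q \<noteq> (S, H) \<and> snd q = H)"
      by (rule bspec[OF PL3A that(1)])
    then have "H \<noteq> {} \<longrightarrow> (H, {}) \<in> SS \<and> (\<exists>!q. q \<in> SS \<and> q \<noteq> (S, H) \<and> snd q = H)"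
      by (simp only: prod.case)
    then show ?thesis using that(2) by (rule mp)
  qed
  have mem: "(S, h S) \<in> SS" if SP: "S \<in> P" for S
  proof -
    obtain p where p: "S = fst p" "p \<in> SS" using SP unfolding P_def by (rule imageE)
    obtain H where H: "(S, H) \<in> SS" using p by (metis prod.collapse)
    have "(THE H. (S, H) \<in> SS) = H"
    proof (rule the_equality)
      show "(S, H) \<in> SS" by (rule H)
      fix x assume "(S, x) \<in> SS"
      then have "(S, x) = (S, H)" using inj[OF _ H] by simp
      then show "x = H" by simp
    qed
    moreover have "S \<in> fst ` SS" using SP by (simp add: P_def)
    ultimately show ?thesis using H by (simp add: h_def)
  qed
  have uniq: "H = h S" if "(S, H) \<in> SS" for S H
  proof -
    have "S \<in> P" using fm[OF that] .
    then have m: "(S, h S) \<in> SS" by (rule mem)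
    have "(S, H) = (S, h S)" using inj[OF that m] by simp
    then show ?thesis by simp
  qed
  have PhiE: "Phi (P, h) = SS"
  proof
    show "Phi (P, h) \<subseteq> SS" using mem by (auto simp: Phi_def)
    show "SS \<subseteq> Phi (P, h)"
    proof
      fix p assume p: "p \<in> SS"
      obtain S H where SH: "p = (S, H)" by fastforce
      then have "S \<in> P" using p fm by blast
      moreover have "H = h S" using uniq p SH by simp
      ultimately show "p \<in> Phi (P, h)" using SH by (auto simp: Phi_def)
    qed
  qed
  have hpm: "h \<in> pm P {}"
  proof (rule pmI)
    fix S assume "S \<notin> P" then show "h S = undefined" by (simp add: h_def P_def)
  next
    fix S assume S: "S \<in> P" "h S \<noteq> {}"
    have m: "(S, h S) \<in> SS" using mem[OF S(1)] .
    note AB = PL3[OF m S(2)]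
    note A = conjunct1[OF AB] and B = conjunct2[OF AB]
    have hSP: "h S \<in> P" using fm[OF A] .
    have hh: "h (h S) = {}" using uniq[OF A] by simp
    from B obtain q where q: "q \<in> SS \<and> q \<noteq> (S, h S) \<and> snd q = h S"
      and qu: "\<And>r. r \<in> SS \<and> r \<noteq> (S, h S) \<and> snd r = h S \<Longrightarrow> r = q" by (rule ex1E) blast
    obtain S' where q': "q = (S', h S)" using q by (metis prod.collapse)
    have "(S', h S) \<in> SS" using q q' by simp
    then have S'P: "S' \<in> P" by (rule fm)
    have hS': "h S' = h S" using uniq[OF \<open>(S', h S) \<in> SS\<close>] by simp
    have S'S: "S' \<noteq> S" using q q' by auto
    have "\<exists>!y. y \<in> P \<and> y \<noteq> S \<and> h y = h S"
    proof (rule ex1I[where a=S'])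
      show "S' \<in> P \<and> S' \<noteq> S \<and> h S' = h S" using S'P S'S hS' by simp
      fix r assume r: "r \<in> P \<and> r \<noteq> S \<and> h r = h S"
      have "r \<in> P" using r by simp
      then have "(r, h r) \<in> SS" by (rule mem)
      then have "(r, h r) \<in> SS \<and> (r, h r) \<noteq> (S, h S) \<and> snd (r, h r) = h S" using r by simp
      then have "(r, h r) = q" by (rule qu)
      then show "r = S'" using q' by simp
    qed
    then show "h S \<in> P \<and> h (h S) = {} \<and> (\<exists>!y. y \<in> P \<and> y \<noteq> S \<and> h y = h S)" using hSP hh by simp
  qed
  show "partition_on X (fst (Psi SS))" using part PsiE by simp
  show "snd (Psi SS) \<in> pm (fst (Psi SS)) {}" using hpm PsiE by simp
  show "Phi (Psi SS) = SS" using PhiE PsiE by simp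
qed

lemma Psi_Phi:
  assumes h: "h \<in> pm P {}"
  shows "Psi (Phi (P, h)) = (P, h)"
proof -
  have f: "fst ` Phi (P, h) = P" unfolding Phi_def by (simp add: image_image)
  have "(\<lambda>S. if S \<in> P then (THE H. (S, H) \<in> Phi (P, h)) else undefined) = h"
  proof
    fix S show "(if S \<in> P then (THE H. (S, H) \<in> Phi (P, h)) else undefined) = h S"
    proof (cases "S \<in> P")
      case True
      have "(THE H. (S, H) \<in> Phi (P, h)) = h S"
        by (rule the_equality) (use True in \<open>auto simp: Phi_def\<close>)
      then show ?thesis using True by simp
    next
      case False then show ?thesis using pmD(1)[OF h False] by simp
    qed
  qed
  then show ?thesis unfolding Psi_def f by simp
qed

lemma polestar_bij:
  "bij_betw Phi (SIGMA P:{P. partition_on X P}. pm P {}) (polestar_systems X)"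
proof (rule bij_betw_byWitness[where f'=Psi])
  show "\<forall>a\<in>(SIGMA P:{P. partition_on X P}. pm P {}). Psi (Phi a) = a"
  proof
    fix a assume "a \<in> (SIGMA P:{P. partition_on X P}. pm P {})"
    then obtain P h where "a = (P, h)" "h \<in> pm P {}" by (elim SigmaE) simp
    then show "Psi (Phi a) = a" using Psi_Phi by simp
  qed
  show "\<forall>a'\<in>polestar_systems X. Phi (Psi a') = a'"
  proof
    fix SS assume "SS \<in> polestar_systems X"
    then have "polestar_system X SS" by (simp add: polestar_systems_def)
    then show "Phi (Psi SS) = SS" by (rule Psi_props(3))
  qed
  show "Phi ` (SIGMA P:{P. partition_on X P}. pm P {}) \<subseteq> polestar_systems X"
  proof
    fix SS assume "SS \<in> Phi ` (SIGMA P:{P. partition_on X P}. pm P {})"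
    then obtain a where "a \<in> (SIGMA P:{P. partition_on X P}. pm P {})" "SS = Phi a" by (elim imageE) simp
    then obtain P h where "SS = Phi (P, h)" "partition_on X P" "h \<in> pm P {}" by (elim SigmaE) simp
    then have "polestar_system X SS" using Phi_polestar by simp
    then show "SS \<in> polestar_systems X" by (simp add: polestar_systems_def)
  qed
  show "Psi ` polestar_systems X \<subseteq> (SIGMA P:{P. partition_on X P}. pm P {})"
  proof
    fix a assume "a \<in> Psi ` polestar_systems X"
    then obtain SS where SS0: "SS \<in> polestar_systems X" and a: "a = Psi SS" by (elim imageE) simp
    then have SS: "polestar_system X SS" by (simp add: polestar_systems_def)
    have "(fst (Psi SS), snd (Psi SS)) \<in> (SIGMA P:{P. partition_on X P}. pm P {})"
      using Psi_props(1,2)[OF SS] by (intro SigmaI) simp_all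
    then show "a \<in> (SIGMA P:{P. partition_on X P}. pm P {})" using a by simp
  qed
qed

lemma card_part_le:
  assumes "finite X" "partition_on X P"
  shows "card P \<le> card X"
proof -
  note d = partD[OF assms(2)]
  define f :: "'a set \<Rightarrow> 'a" where "f = (\<lambda>S. SOME x. x \<in> S)"
  have fS: "f S \<in> S" if "S \<in> P" for S
    using d(3) that unfolding f_def by (metis ex_in_conv someI_ex)
  have "inj_on f P"
  proof (rule inj_onI)
    fix S T assume "S \<in> P" "T \<in> P" "f S = f T"
    then have "f S \<in> S \<inter> T" using fS by (metis IntI)
    then show "S = T" using d(2)[OF \<open>S \<in> P\<close> \<open>T \<in> P\<close>] by blast
  qed
  moreover have "f ` P \<subseteq> X" using fS d(1) by auto
  ultimately show ?thesis using card_inj_on_le assms(1) by blast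
qed

theorem mainTheorem10:
  fixes X :: "'a set" and n :: nat
  assumes "finite X" and "card X = n" and "n \<ge> 1"
  shows "real (card (polestar_systems X)) =
    (\<Sum>k = 1..n. real (Stirling n k) *
       (\<Sum>l = 0..k div 3. (fact k / (6 ^ l * fact l * fact (k - 3 * l))) * 3 ^ l))"
proof -
  let ?Parts = "{P. partition_on X P}"
  have finParts: "finite ?Parts" using finitely_many_partition_on[OF assms(1)] .
  have finP: "finite P" if "P \<in> ?Parts" for P using finite_elements[OF assms(1)] that by simp
  have "card (polestar_systems X) = card (SIGMA P:?Parts. pm P {})"
    using bij_betw_same_card[OF polestar_bij[of X]] by simp
  also have "\<dots> = (\<Sum>P\<in>?Parts. card (pm P {}))"
  proof -
    have "\<forall>P\<in>?Parts. finite (pm P {})" using pm_finite[OF finP] by blast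
    then show ?thesis by (rule card_SigmaI[OF finParts])
  qed
  also have "\<dots> = (\<Sum>P\<in>?Parts. F (card P))"
  proof (rule sum.cong[OF refl])
    fix P assume P: "P \<in> ?Parts"
    have "{} \<notin> P" using P partD(3)[of X P] by simp
    then show "card (pm P {}) = F (card P)" using pm_card[OF finP[OF P]] by simp
  qed
  also have "\<dots> = (\<Sum>k\<in>{0..n}. \<Sum>P\<in>{P \<in> ?Parts. card P = k}. F (card P))"
  proof -
    have "card ` ?Parts \<subseteq> {0..n}" using card_part_le[OF assms(1)] assms(2) by auto
    then show ?thesis by (rule sum.group[OF finParts finite_atLeastAtMost, symmetric])
  qed
  also have "\<dots> = (\<Sum>k\<in>{0..n}. Stirling n k * F k)"
  proof (rule sum.cong[OF refl])
    fix k
    have "(\<Sum>P\<in>{P \<in> ?Parts. card P = k}. F (card P)) = (\<Sum>P\<in>{P \<in> ?Parts. card P = k}. F k)"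
      by (rule sum.cong) auto
    also have "\<dots> = card {P. partition_on X P \<and> card P = k} * F k" by simp
    also have "\<dots> = Stirling n k * F k" using stirling_partitions[OF assms(1)] assms(2) by simp
    finally show "(\<Sum>P\<in>{P \<in> ?Parts. card P = k}. F (card P)) = Stirling n k * F k" .
  qed
  also have "\<dots> = (\<Sum>k\<in>{1..n}. Stirling n k * F k)"
  proof -
    have "{0..n} = insert 0 {1..n}" by auto
    moreover have "Stirling n 0 = 0" using assms(3) by (cases n) auto
    ultimately show ?thesis by simp
  qed
  finally have "real (card (polestar_systems X)) = (\<Sum>k = 1..n. real (Stirling n k) * real (F k))"
    by simp
  also have "\<dots> = (\<Sum>k = 1..n. real (Stirling n k) *
       (\<Sum>l = 0..k div 3. (fact k / (6 ^ l * fact l * fact (k - 3 * l))) * 3 ^ l))"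
    by (rule sum.cong[OF refl]) (simp add: F_Gc Gc_def)
  finally show ?thesis .
qed


end
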